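(* Let $I$ be a countably infinite set, $\lambda,\rho\colon I\to I$ bijections, and $E$ a non-trivial directed $\lambda,\rho$-weakly commutative generalized pseudo effect algebra. If the kite pseudo effect algebra $K^{\lambda,\rho}_I(E)$ satisfies RDP$_1$ and has a least non-trivial normal ideal, then $K^{\lambda,\rho}_I(E)$ is isomorphic to $K^{\mathrm{id},\rho'}_{\mathbb Z}(E)$, where $\rho'(i)=i-1$ for $i\in\mathbb Z$.
   Context: A generalized pseudo effect algebra (GPEA) is a structure $(E;+,0)$ with partial binary $+$ and constant $0$ such that for all $a,b,c$: (GP1) $a+b$ and $(a+b)+c$ exist iff $b+c$ and $a+(b+c)$ exist, and then they are equal; (GP2) if $a+b$ exists there are $d,e$ with $a+b=d+a=b+e$; (GP3) left and right cancellation; (GP4) $a+b=0$ implies $a=b=0$; (GP5) $a+0=0+a=a$. Non-trivial: $E\neq\{0\}$. Order: $a\le b$ iff $a+c=b$ for some $c$; for $a\le b$, $b\ominus_\ell a$ is the unique $d$ with $d+a=b$, $a\ominus_r b$ the unique $e$ with $a+e=b$. Directed: any two elements have a common upper bound. RDP$_1$: whenever $a_1+a_2=b_1+b_2$ there are $c_{11},c_{12},c_{21},c_{22}$ with $a_1=c_{11}+c_{12}$, $a_2=c_{21}+c_{22}$, $b_1=c_{11}+c_{21}$, $b_2=c_{12}+c_{22}$, such that $0\le x\le c_{12}$, $0\le y\le c_{21}$ imply $x+y=y+x$. An ideal is a non-empty subset closed under existing sums and downward closed; normal if $x+N=N+x$ for all $x$ ($x+N=\{x+y\colon y\in N,\ x+y\text{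 defined}\}$, $N+x$ dually); non-trivial if $\neq\{0\}$; least non-trivial if contained in every non-trivial normal ideal. $\lambda,\rho$-weak commutativity: for all families $(f_j)$, $(a_i)$ in $E$ and all $i$: $f_{\rho^{-1}(i)}+a_i$ defined iff $a_i+f_{\lambda^{-1}(i)}$ defined, and $f_{\lambda^{-1}(i)}+a_i$ defined iff $a_i+f_{\rho^{-1}(i)}$ defined. Kite $K^{\lambda,\rho}_I(E)$ (a pseudo effect algebra): universe $E^I\uplus\overline E^I$, $\overline E=\{\bar a\colon a\in E\}$ a disjoint copy; $0=\langle 0\rangle$, $1=\langle\bar 0\rangle$; $\langle\bar a_i\rangle+\langle\bar b_i\rangle$ undefined; $\langle\bar a_i\colon i\in I\rangle+\langle f_j\colon j\in I\rangle=\langle\overline{f_{\rho^{-1}(i)}\ominus_r a_i}\rangle$ when $f_{\rho^{-1}(i)}\le a_i$ for all $i$; $\langle f_j\rangle+\langle\bar a_i\rangle=\langle\overline{a_i\ominus_\ell f_{\lambda^{-1}(i)}}\rangle$ when $f_{\lambda^{-1}(i)}\le a_i$ for all $i$; $\langle f_j\rangle+\langle g_j\rangle=\langle f_j+g_j\rangle$ when all coordinate sums are defined. Isomorphism means isomorphism of pseudo effect algebras. *)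

theory Defs
  imports "HOL-Library.Countable"
begin

(* A partial binary operation on a carrier set is modelled as an option-valued
function; p a b = None means that a + b is undefined. *)

type_synonym 'a pop = "'a \<Rightarrow> 'a \<Rightarrow> 'a option"

definition padd3l :: "'a pop \<Rightarrow> 'a \<Rightarrow> 'a \<Rightarrow> 'a \<Rightarrow> 'a option" where
  "padd3l p a b c = (case p a b of None \<Rightarrow> None | Some d \<Rightarrow> p d c)"

definition padd3r :: "'a pop \<Rightarrow> 'a \<Rightarrow> 'a \<Rightarrow> 'a \<Rightarrow> 'a option" where
  "padd3r p a b c = (case p b c of None \<Rightarrow> None | Some e \<Rightarrow> p a e)"

definition gpea :: "'a set \<Rightarrow> 'a pop \<Rightarrow> 'a \<Rightarrow> bool" where
  "gpea E p z \<longleftrightarrow>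
     z \<in> E \<and>
     (\<forall>a\<in>E. \<forall>b\<in>E. \<forall>c. p a b = Some c \<longrightarrow> c \<in> E) \<and>
     (\<forall>a\<in>E. \<forall>b\<in>E. \<forall>c\<in>E. padd3l p a b c = padd3r p a b c) \<and>
     (\<forall>a\<in>E. \<forall>b\<in>E. \<forall>s. p a b = Some s \<longrightarrow>
         (\<exists>d\<in>E. \<exists>e\<in>E. p d a = Some s \<and> p b e = Some s)) \<and>
     (\<forall>a\<in>E. \<forall>b\<in>E. \<forall>c\<in>E. p a b \<noteq> None \<and> p a b = p a c \<longrightarrow> b = c) \<and>
     (\<forall>a\<in>E. \<forall>b\<in>E. \<forall>c\<in>E. p b a \<noteq> None \<and> p b a = p c a \<longrightarrow> b = c) \<and>
     (\<forall>a\<in>E. \<forall>b\<in>E. p a b = Some z \<longrightarrow> a = z \<and> b = z) \<and>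
     (\<forall>a\<in>E. p a z = Some a \<and> p z a = Some a)"

definition pleq :: "'a set \<Rightarrow> 'a pop \<Rightarrow> 'a \<Rightarrow> 'a \<Rightarrow> bool" where
  "pleq E p a b \<longleftrightarrow> (\<exists>c\<in>E. p a c = Some b)"

definition lminus :: "'a set \<Rightarrow> 'a pop \<Rightarrow> 'a \<Rightarrow> 'a \<Rightarrow> 'a" where
  "lminus E p b a = (THE d. d \<in> E \<and> p d a = Some b)"

definition rminus :: "'a set \<Rightarrow> 'a pop \<Rightarrow> 'a \<Rightarrow> 'a \<Rightarrow> 'a" where
  "rminus E p a b = (THE e. e \<in> E \<and> p a e = Some b)"

definition directed :: "'a set \<Rightarrow> 'a pop \<Rightarrow> bool" where
  "directed E p \<longleftrightarrow> (\<forall>a\<in>E. \<forall>b\<in>E. \<exists>c\<in>E. pleq E p a c \<and> pleq E p b c)"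

definition weak_comm :: "'a set \<Rightarrow> 'a pop \<Rightarrow> ('i \<Rightarrow> 'i) \<Rightarrow> ('i \<Rightarrow> 'i) \<Rightarrow> bool" where
  "weak_comm E p lam rho \<longleftrightarrow>
     (\<forall>f a :: 'i \<Rightarrow> 'a. (\<forall>j. f j \<in> E) \<longrightarrow> (\<forall>i. a i \<in> E) \<longrightarrow>
        (\<forall>i. (p (f (inv rho i)) (a i) \<noteq> None \<longleftrightarrow> p (a i) (f (inv lam i)) \<noteq> None) \<and>
             (p (f (inv lam i)) (a i) \<noteq> None \<longleftrightarrow> p (a i) (f (inv rho i)) \<noteq> None)))"

(* The kite over the index type 'i: Inl f is \<langle>f\<^sub>j\<rangle> \<in> E\<^sup>I,
  Inr a is \<langle>a\<^sub>i bar\<rangle> \<in> Ebar\<^sup>I. *)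
definition kite_carrier :: "'a set \<Rightarrow> (('i \<Rightarrow> 'a) + ('i \<Rightarrow> 'a)) set" where
  "kite_carrier E = {Inl f | f. \<forall>i. f i \<in> E} \<union> {Inr f | f. \<forall>i. f i \<in> E}"

definition kite_zero :: "'a \<Rightarrow> ('i \<Rightarrow> 'a) + ('i \<Rightarrow> 'a)" where
  "kite_zero z = Inl (\<lambda>_. z)"

definition kite_one :: "'a \<Rightarrow> ('i \<Rightarrow> 'a) + ('i \<Rightarrow> 'a)" where
  "kite_one z = Inr (\<lambda>_. z)"

fun kite_plus :: "'a set \<Rightarrow> 'a pop \<Rightarrow> ('i \<Rightarrow> 'i) \<Rightarrow> ('i \<Rightarrow> 'i) \<Rightarrow>
     (('i \<Rightarrow> 'a) + ('i \<Rightarrow> 'a)) pop" where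
  "kite_plus E p lam rho (Inr a) (Inr b) = None"
| "kite_plus E p lam rho (Inr a) (Inl f) =
     (if \<forall>i. pleq E p (f (inv rho i)) (a i)
      then Some (Inr (\<lambda>i. rminus E p (f (inv rho i)) (a i))) else None)"
| "kite_plus E p lam rho (Inl f) (Inr a) =
     (if \<forall>i. pleq E p (f (inv lam i)) (a i)
      then Some (Inr (\<lambda>i. lminus E p (a i) (f (inv lam i)))) else None)"
| "kite_plus E p lam rho (Inl f) (Inl g) =
     (if \<forall>i. p (f i) (g i) \<noteq> None
      then Some (Inl (\<lambda>i. the (p (f i) (g i)))) else None)"

(* Riesz decomposition property RDP\<^sub>1. The equation x + y = y + x between
  partial sums is read as Kleene equality. *)
definition rdp1 :: "'a set \<Rightarrow> 'a pop \<Rightarrow> bool" where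
  "rdp1 E p \<longleftrightarrow>
     (\<forall>a1\<in>E. \<forall>a2\<in>E. \<forall>b1\<in>E. \<forall>b2\<in>E.
        p a1 a2 \<noteq> None \<and> p a1 a2 = p b1 b2 \<longrightarrow>
        (\<exists>c11\<in>E. \<exists>c12\<in>E. \<exists>c21\<in>E. \<exists>c22\<in>E.
           p c11 c12 = Some a1 \<and> p c21 c22 = Some a2 \<and>
           p c11 c21 = Some b1 \<and> p c12 c22 = Some b2 \<and>
           (\<forall>x\<in>E. \<forall>y\<in>E. pleq E p x c12 \<longrightarrow> pleq E p y c21 \<longrightarrow> p x y = p y x)))"

definition ideal :: "'a set \<Rightarrow> 'a pop \<Rightarrow> 'a set \<Rightarrow> bool" where
  "ideal E p N \<longleftrightarrow> N \<subseteq> E \<and> N \<noteq> {} \<and>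
     (\<forall>a\<in>N. \<forall>b\<in>N. \<forall>c. p a b = Some c \<longrightarrow> c \<in> N) \<and>
     (\<forall>a\<in>E. \<forall>b\<in>N. pleq E p a b \<longrightarrow> a \<in> N)"

definition normal_ideal :: "'a set \<Rightarrow> 'a pop \<Rightarrow> 'a set \<Rightarrow> bool" where
  "normal_ideal E p N \<longleftrightarrow> ideal E p N \<and>
     (\<forall>x\<in>E. {c. \<exists>y\<in>N. p x y = Some c} = {c. \<exists>y\<in>N. p y x = Some c})"

definition has_least_nontrivial_normal_ideal :: "'a set \<Rightarrow> 'a pop \<Rightarrow> 'a \<Rightarrow> bool" where
  "has_least_nontrivial_normal_ideal E p z \<longleftrightarrow>
     (\<exists>N. normal_ideal E p N \<and> N \<noteq> {z} \<and>
          (\<forall>M. normal_ideal E p M \<and> M \<noteq> {z} \<longrightarrow> N \<subseteq> M))"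

definition pea_iso :: "'a set \<Rightarrow> 'a pop \<Rightarrow> 'b set \<Rightarrow> 'b pop \<Rightarrow> ('a \<Rightarrow> 'b) \<Rightarrow> bool" where
  "pea_iso A p B q f \<longleftrightarrow> bij_betw f A B \<and>
     (\<forall>a\<in>A. \<forall>b\<in>A. q (f a) (f b) = map_option f (p a b))"

end

theory Submission imports Defs begin


lemma gp_closed: "gpea E p z \<Longrightarrow> a\<in>E \<Longrightarrow> b\<in>E \<Longrightarrow> p a b = Some c \<Longrightarrow> c \<in> E"
  unfolding gpea_def by blast
lemma gp2: "gpea E p z \<Longrightarrow> a\<in>E \<Longrightarrow> b\<in>E \<Longrightarrow> p a b = Some s \<Longrightarrow>
   \<exists>d\<in>E. \<exists>e\<in>E. p d a = Some s \<and> p b e = Some s"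
  unfolding gpea_def by blast
lemma gp_lc: "gpea E p z \<Longrightarrow> a\<in>E \<Longrightarrow> b\<in>E \<Longrightarrow> c\<in>E \<Longrightarrow> p a b = Some s \<Longrightarrow> p a c = Some s \<Longrightarrow> b = c"
  unfolding gpea_def by (metis option.distinct(1))
lemma gp_rc: "gpea E p z \<Longrightarrow> a\<in>E \<Longrightarrow> b\<in>E \<Longrightarrow> c\<in>E \<Longrightarrow> p b a = Some s \<Longrightarrow> p c a = Some s \<Longrightarrow> b = c"
  unfolding gpea_def by (metis option.distinct(1))
lemma gp4: "gpea E p z \<Longrightarrow> a\<in>E \<Longrightarrow> b\<in>E \<Longrightarrow> p a b = Some z \<Longrightarrow> a = z \<and> b = z"
  unfolding gpea_def by blast
lemma gp5: "gpea E p z \<Longrightarrow> a\<in>E \<Longrightarrow> p a z = Some a \<and> p z a = Some a"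
  unfolding gpea_def by blast
lemma gpz: "gpea E p z \<Longrightarrow> z \<in> E"
  unfolding gpea_def by blast

lemma rminus_eq: "gpea E p z \<Longrightarrow> a\<in>E \<Longrightarrow> e\<in>E \<Longrightarrow> p a e = Some b \<Longrightarrow> rminus E p a b = e"
  unfolding rminus_def by (rule the_equality) (auto intro: gp_lc)
lemma lminus_eq: "gpea E p z \<Longrightarrow> a\<in>E \<Longrightarrow> d\<in>E \<Longrightarrow> p d a = Some b \<Longrightarrow> lminus E p b a = d"
  unfolding lminus_def by (rule the_equality) (auto intro: gp_rc)

definition pw :: "('i \<Rightarrow> 'i) \<Rightarrow> int \<Rightarrow> 'i \<Rightarrow> 'i" where
  "pw s n = (if n \<ge> 0 then s ^^ nat n else inv s ^^ nat (-n))"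

lemma pw0: "pw s 0 x = x" by (simp add: pw_def)

lemma pw_succ: assumes "bij s" shows "pw s (n+1) x = s (pw s n x)"
proof (cases "n \<ge> 0")
  case True then have "nat (n+1) = Suc (nat n)" by simp
  then show ?thesis using True by (simp add: pw_def)
next
  case False
  show ?thesis
  proof (cases "n = -1")
    case True then show ?thesis using assms by (simp add: pw_def bij_is_surj surj_f_inv_f)
  next
    case False2: False
    have "nat (-n) = Suc (nat (-(n+1)))" using False False2 by simp
    then show ?thesis using False False2 assms by (simp add: pw_def surj_f_inv_f bij_is_surj)
  qed
qed

lemma pw_pred: assumes "bij s" shows "pw s (n-1) x = inv s (pw s n x)"
proof -
  have "pw s n x = s (pw s (n-1) x)" using pw_succ[OF assms, of "n-1"] by simp
  then show ?thesis using assms by (simp add: bij_is_inj)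
qed

lemma pw_add: assumes "bij s" shows "pw s (k + m) x = pw s k (pw s m x)"
proof (induction k rule: int_induct[where k=0])
  case base then show ?case by (simp add: pw0)
next
  case (step1 i)
  have "pw s (i + 1 + m) x = pw s ((i + m) + 1) x" by (simp add: ac_simps)
  also have "\<dots> = s (pw s (i+m) x)" by (rule pw_succ[OF assms])
  finally show ?case using step1 by (simp add: pw_succ[OF assms])
next
  case (step2 i)
  have "pw s (i - 1 + m) x = pw s ((i + m) - 1) x" by (simp add: algebra_simps)
  also have "\<dots> = inv s (pw s (i+m) x)" by (rule pw_pred[OF assms])
  finally show ?case using step2 by (simp add: pw_pred[OF assms])
qed

lemma pw_periodic: assumes "bij s" "d > 0" "pw s d y = y"
  shows "pw s n y \<in> (\<lambda>j. pw s j y) ` {0..<d}"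
proof (induction n rule: int_induct[where k=0])
  case base show ?case using assms by force
next
  case (step1 i)
  then obtain j where j: "j \<in> {0..<d}" "pw s i y = pw s j y" by auto
  show ?case
  proof (cases "j+1 < d")
    case True
    have "pw s (i+1) y = pw s (j+1) y" using j by (simp add: pw_succ[OF assms(1)])
    then show ?thesis using True j by force
  next
    case False
    then have "j + 1 = d" using j by auto
    have "pw s (i+1) y = pw s (j+1) y" using j by (simp add: pw_succ[OF assms(1)])
    then have "pw s (i+1) y = pw s 0 y" using \<open>j+1 = d\<close> assms by (simp add: pw0)
    then show ?thesis using assms by force
  qed
next
  case (step2 i)
  then obtain j where j: "j \<in> {0..<d}" "pw s i y = pw s j y" by auto
  show ?case
  proof (cases "j \<ge> 1")
    case True
    have "pw s (i-1) y = pw s (j-1) y" using j by (simp add: pw_pred[OF assms(1)])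
    then show ?thesis using True j by force
  next
    case False
    then have "j = 0" using j by auto
    then have "pw s (i-1) y = inv s (pw s d y)" using j assms by (simp add: pw_pred[OF assms(1)] pw0)
    also have "\<dots> = pw s (d-1) y" by (simp add: pw_pred[OF assms(1)])
    finally show ?thesis using assms by force
  qed
qed

lemma pw_inj: assumes "bij s" "infinite (UNIV::'i set)" "range (\<lambda>n. pw s n (x::'i)) = UNIV"
  shows "inj (\<lambda>n. pw s n x)"
proof (rule injI, rule ccontr)
  fix m n assume eq: "pw s m x = pw s n x" and ne: "m \<noteq> n"
  have "\<exists>m n. m < n \<and> pw s m x = pw s n x" using eq ne
    by (metis linorder_neqE)
  then obtain m n where mn: "m < n" "pw s m x = pw s n x" by blast
  define y where "y = pw s m x"
  have "pw s (n - m) y = y" unfolding y_def using mn pw_add[OF assms(1), of "n-m" m x] by simp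
  then have per: "\<And>k. pw s k y \<in> (\<lambda>j. pw s j y) ` {0..<n-m}"
    using pw_periodic[OF assms(1)] mn by auto
  have "UNIV \<subseteq> (\<lambda>j. pw s j y) ` {0..<n-m}"
  proof
    fix w :: 'i
    obtain k where "w = pw s k x" using assms(3) by (metis rangeE UNIV_I)
    then have "w = pw s (k - m) y" unfolding y_def using pw_add[OF assms(1), of "k-m" m x] by simp
    then show "w \<in> (\<lambda>j. pw s j y) ` {0..<n-m}" using per by simp
  qed
  then show False using assms(2) finite_subset by blast
qed



definition NJ :: "'a set \<Rightarrow> 'a \<Rightarrow> 'i set \<Rightarrow> (('i\<Rightarrow>'a)+('i\<Rightarrow>'a)) set" where
  "NJ E z J = {Inl f | f. (\<forall>i. f i \<in> E) \<and> (\<forall>i. i \<notin> J \<longrightarrow> f i = z)}"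

lemma NJ_ideal: assumes g: "gpea E p z"
  shows "ideal (kite_carrier E) (kite_plus E p lam rho) (NJ E z J)"
  unfolding ideal_def
proof (intro conjI ballI allI impI)
  show "NJ E z J \<subseteq> kite_carrier E" unfolding NJ_def kite_carrier_def by auto
  show "NJ E z J \<noteq> {}" unfolding NJ_def using gpz[OF g] by auto
next
  fix a b c assume a: "a \<in> NJ E z J" and b: "b \<in> NJ E z J" and c: "kite_plus E p lam rho a b = Some c"
  obtain f where f: "a = Inl f" "\<forall>i. f i \<in> E" "\<forall>i. i \<notin> J \<longrightarrow> f i = z" using a unfolding NJ_def by auto
  obtain h where h: "b = Inl h" "\<forall>i. h i \<in> E" "\<forall>i. i \<notin> J \<longrightarrow> h i = z" using b unfolding NJ_def by auto
  have def: "\<forall>i. p (f i) (h i) \<noteq> None" and cc: "c = Inl (\<lambda>i. the (p (f i) (h i)))"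
    using c f h by (auto split: if_splits)
  have "\<forall>i. the (p (f i) (h i)) \<in> E"
    using def f h gp_closed[OF g] by (metis option.collapse)
  moreover have "\<forall>i. i \<notin> J \<longrightarrow> the (p (f i) (h i)) = z"
    using f h gp5[OF g gpz[OF g]] by auto
  ultimately show "c \<in> NJ E z J" unfolding NJ_def cc by auto
next
  fix a b assume a: "a \<in> kite_carrier E" and b: "b \<in> NJ E z J" and le: "pleq (kite_carrier E) (kite_plus E p lam rho) a b"
  obtain f where f: "b = Inl f" "\<forall>i. f i \<in> E" "\<forall>i. i \<notin> J \<longrightarrow> f i = z" using b unfolding NJ_def by auto
  obtain c where c: "c \<in> kite_carrier E" "kite_plus E p lam rho a c = Some b" using le unfolding pleq_def by auto
  obtain g where ga: "a = Inl g" "\<forall>i. g i \<in> E"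
    using a c f unfolding kite_carrier_def by (cases c) (auto split: if_splits)
  obtain h where hc: "c = Inl h" "\<forall>i. h i \<in> E"
    using c f ga unfolding kite_carrier_def by (auto split: if_splits)
  have def: "\<forall>i. p (g i) (h i) \<noteq> None" and ff: "f = (\<lambda>i. the (p (g i) (h i)))"
    using c f ga hc by (auto split: if_splits)
  have "\<forall>i. p (g i) (h i) = Some (f i)" using def ff by auto
  then have "\<forall>i. i \<notin> J \<longrightarrow> g i = z" using f gp4[OF g] ga hc by metis
  then show "a \<in> NJ E z J" unfolding NJ_def using ga by auto
qed

lemma NJ_normal: fixes lam rho :: "'i \<Rightarrow> 'i" and E :: "'a set" assumes g: "gpea E p z" and bl: "bij lam" and br: "bij rho"
  and J1: "\<forall>j. inv rho (lam j) \<in> J \<longrightarrow> j \<in> J"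
  and J2: "\<forall>j. inv lam (rho j) \<in> J \<longrightarrow> j \<in> J"
  shows "normal_ideal (kite_carrier E) (kite_plus E p lam rho) (NJ E z J)"
  unfolding normal_ideal_def
proof (intro conjI ballI)
  show "ideal (kite_carrier E) (kite_plus E p lam rho) (NJ E z J)" by (rule NJ_ideal[OF g])
next
  have zE: "z \<in> E" by (rule gpz[OF g])
  have lamI: "\<And>i. lam (inv lam i) = i" using bl by (simp add: bij_is_surj surj_f_inv_f)
  have rhoI: "\<And>i. rho (inv rho i) = i" using br by (simp add: bij_is_surj surj_f_inv_f)
  fix x :: "('i \<Rightarrow> 'a) + ('i \<Rightarrow> 'a)" assume x: "x \<in> kite_carrier E"
  show "{c. \<exists>y\<in>NJ E z J. kite_plus E p lam rho x y = Some c} = {c. \<exists>y\<in>NJ E z J. kite_plus E p lam rho y x = Some c}"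
  proof (cases x)
    case (Inl g0)
    have g0: "\<forall>i. g0 i \<in> E" using x Inl unfolding kite_carrier_def by auto
    show ?thesis
    proof (intro set_eqI iffI; clarsimp)
      fix y c assume y: "y \<in> NJ E z J" and yc: "kite_plus E p lam rho x y = Some c"
      obtain f where f: "y = Inl f" "\<forall>i. f i \<in> E" "\<forall>i. i \<notin> J \<longrightarrow> f i = z" using y unfolding NJ_def by auto
      have def: "\<forall>i. p (g0 i) (f i) \<noteq> None" and cc: "c = Inl (\<lambda>i. the (p (g0 i) (f i)))"
        using yc f Inl by (auto split: if_splits)
      have "\<forall>i. \<exists>d. d \<in> E \<and> p d (g0 i) = p (g0 i) (f i)"
      proof
        fix i obtain s where "p (g0 i) (f i) = Some s" using def by auto
        then show "\<exists>d. d \<in> E \<and> p d (g0 i) = p (g0 i) (f i)" using gp2[OF g] g0 f by metis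
      qed
      then obtain d where d: "\<forall>i. d i \<in> E \<and> p (d i) (g0 i) = p (g0 i) (f i)" by metis
      have dz: "\<forall>i. i \<notin> J \<longrightarrow> d i = z"
      proof (intro allI impI)
        fix i assume "i \<notin> J"
        then have "p (d i) (g0 i) = Some (g0 i)" "p z (g0 i) = Some (g0 i)" using d f gp5[OF g] g0 by auto
        then show "d i = z" using gp_rc[OF g] d g0 zE by metis
      qed
      show "\<exists>y\<in>NJ E z J. kite_plus E p lam rho y x = Some c"
        apply (rule bexI[of _ "Inl d"])
        using d def cc Inl dz unfolding NJ_def by auto
    next
      fix y c assume y: "y \<in> NJ E z J" and yc: "kite_plus E p lam rho y x = Some c"
      obtain f where f: "y = Inl f" "\<forall>i. f i \<in> E" "\<forall>i. i \<notin> J \<longrightarrow> f i = z" using y unfolding NJ_def by auto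
      have def: "\<forall>i. p (f i) (g0 i) \<noteq> None" and cc: "c = Inl (\<lambda>i. the (p (f i) (g0 i)))"
        using yc f Inl by (auto split: if_splits)
      have "\<forall>i. \<exists>d. d \<in> E \<and> p (g0 i) d = p (f i) (g0 i)"
      proof
        fix i obtain s where "p (f i) (g0 i) = Some s" using def by auto
        then show "\<exists>d. d \<in> E \<and> p (g0 i) d = p (f i) (g0 i)" using gp2[OF g] g0 f by metis
      qed
      then obtain d where d: "\<forall>i. d i \<in> E \<and> p (g0 i) (d i) = p (f i) (g0 i)" by metis
      have dz: "\<forall>i. i \<notin> J \<longrightarrow> d i = z"
      proof (intro allI impI)
        fix i assume "i \<notin> J"
        then have "p (g0 i) (d i) = Some (g0 i)" "p (g0 i) z = Some (g0 i)" using d f gp5[OF g] g0 by auto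
        then show "d i = z" using gp_lc[OF g] d g0 zE by metis
      qed
      show "\<exists>y\<in>NJ E z J. kite_plus E p lam rho x y = Some c"
        apply (rule bexI[of _ "Inl d"])
        using d def cc Inl dz unfolding NJ_def by auto
    qed
  next
    case (Inr a)
    have aE: "\<forall>i. a i \<in> E" using x Inr unfolding kite_carrier_def by auto
    show ?thesis
    proof (intro set_eqI iffI; clarsimp)
      fix y c assume y: "y \<in> NJ E z J" and yc: "kite_plus E p lam rho x y = Some c"
      obtain f where f: "y = Inl f" "\<forall>i. f i \<in> E" "\<forall>i. i \<notin> J \<longrightarrow> f i = z" using y unfolding NJ_def by auto
      have le: "\<forall>i. pleq E p (f (inv rho i)) (a i)" and cc: "c = Inr (\<lambda>i. rminus E p (f (inv rho i)) (a i))"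
        using yc f Inr by (auto split: if_splits)
      have "\<forall>i. \<exists>e e'. e \<in> E \<and> e' \<in> E \<and> p (f (inv rho i)) e = Some (a i) \<and> p e e' = Some (a i)"
      proof
        fix i obtain e where e: "e \<in> E" "p (f (inv rho i)) e = Some (a i)" using le unfolding pleq_def by auto
        then show "\<exists>e e'. e \<in> E \<and> e' \<in> E \<and> p (f (inv rho i)) e = Some (a i) \<and> p e e' = Some (a i)"
          using gp2[OF g, of "f (inv rho i)" e "a i"] f by blast
      qed
      then obtain e e' where ee: "\<forall>i. e i \<in> E \<and> e' i \<in> E \<and> p (f (inv rho i)) (e i) = Some (a i) \<and> p (e i) (e' i) = Some (a i)"
        by metis
      define f' where "f' = (\<lambda>j. e' (lam j))"
      have f'i: "\<And>i. f' (inv lam i) = e' i" unfolding f'_def using lamI by simp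
      have f'E: "\<forall>j. f' j \<in> E" unfolding f'_def using ee by auto
      have f'z: "\<forall>j. j \<notin> J \<longrightarrow> f' j = z"
      proof (intro allI impI)
        fix j assume "j \<notin> J"
        then have "f (inv rho (lam j)) = z" using J1 f by blast
        then have "p z (e (lam j)) = Some (a (lam j))" using ee by metis
        then have "e (lam j) = a (lam j)" using gp5[OF g] ee by (metis option.inject)
        then have "p (a (lam j)) (e' (lam j)) = Some (a (lam j))" using ee by metis
        moreover have "p (a (lam j)) z = Some (a (lam j))" using gp5[OF g] aE by auto
        ultimately show "f' j = z" unfolding f'_def using gp_lc[OF g] aE ee zE by metis
      qed
      have le2: "\<forall>i. pleq E p (f' (inv lam i)) (a i)"
      proof
        fix i show "pleq E p (f' (inv lam i)) (a i)"
          unfolding f'i pleq_def using gp2[OF g, of "e i" "e' i" "a i"] ee by blast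
      qed
      have eqs: "\<And>i. lminus E p (a i) (f' (inv lam i)) = rminus E p (f (inv rho i)) (a i)"
        unfolding f'i using lminus_eq[OF g] rminus_eq[OF g] ee f by metis
      show "\<exists>y\<in>NJ E z J. kite_plus E p lam rho y x = Some c"
        apply (rule bexI[of _ "Inl f'"])
        using le2 eqs cc Inr f'E f'z unfolding NJ_def by auto
    next
      fix y c assume y: "y \<in> NJ E z J" and yc: "kite_plus E p lam rho y x = Some c"
      obtain f where f: "y = Inl f" "\<forall>i. f i \<in> E" "\<forall>i. i \<notin> J \<longrightarrow> f i = z" using y unfolding NJ_def by auto
      have le: "\<forall>i. pleq E p (f (inv lam i)) (a i)" and cc: "c = Inr (\<lambda>i. lminus E p (a i) (f (inv lam i)))"
        using yc f Inr by (auto split: if_splits)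
      have "\<forall>i. \<exists>d d'. d \<in> E \<and> d' \<in> E \<and> p d (f (inv lam i)) = Some (a i) \<and> p d' d = Some (a i)"
      proof
        fix i obtain w where w: "w \<in> E" "p (f (inv lam i)) w = Some (a i)" using le unfolding pleq_def by auto
        then obtain d where d: "d \<in> E" "p d (f (inv lam i)) = Some (a i)" using gp2[OF g, of "f (inv lam i)" w "a i"] f by blast
        then show "\<exists>d d'. d \<in> E \<and> d' \<in> E \<and> p d (f (inv lam i)) = Some (a i) \<and> p d' d = Some (a i)"
          using gp2[OF g, of d "f (inv lam i)" "a i"] f by blast
      qed
      then obtain d d' where dd: "\<forall>i. d i \<in> E \<and> d' i \<in> E \<and> p (d i) (f (inv lam i)) = Some (a i) \<and> p (d' i) (d i) = Some (a i)"
        by metis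
      define f' where "f' = (\<lambda>j. d' (rho j))"
      have f'i: "\<And>i. f' (inv rho i) = d' i" unfolding f'_def using rhoI by simp
      have f'E: "\<forall>j. f' j \<in> E" unfolding f'_def using dd by auto
      have f'z: "\<forall>j. j \<notin> J \<longrightarrow> f' j = z"
      proof (intro allI impI)
        fix j assume "j \<notin> J"
        then have "f (inv lam (rho j)) = z" using J2 f by blast
        then have "p (d (rho j)) z = Some (a (rho j))" using dd by metis
        then have "d (rho j) = a (rho j)" using gp5[OF g] dd by (metis option.inject)
        then have "p (d' (rho j)) (a (rho j)) = Some (a (rho j))" using dd by metis
        moreover have "p z (a (rho j)) = Some (a (rho j))" using gp5[OF g] aE by auto
        ultimately show "f' j = z" unfolding f'_def using gp_rc[OF g] aE dd zE by metis
      qed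
      have le2: "\<forall>i. pleq E p (f' (inv rho i)) (a i)"
        unfolding f'i pleq_def using dd by blast
      have eqs: "\<And>i. rminus E p (f' (inv rho i)) (a i) = lminus E p (a i) (f (inv lam i))"
        unfolding f'i using lminus_eq[OF g] rminus_eq[OF g] dd f by metis
      show "\<exists>y\<in>NJ E z J. kite_plus E p lam rho x y = Some c"
        apply (rule bexI[of _ "Inl f'"])
        using le2 eqs cc Inr f'E f'z unfolding NJ_def by auto
    qed
  qed
qed

lemma NJ_nontriv: assumes g: "gpea E p z" and "E \<noteq> {z}" and "j \<in> J"
  shows "NJ E z J \<noteq> {kite_zero z}"
proof
  assume h: "NJ E z J = {kite_zero z}"
  obtain e where e: "e \<in> E" "e \<noteq> z" using assms(2) gpz[OF g] by blast
  have "Inl (\<lambda>i. if i = j then e else z) \<in> NJ E z J" unfolding NJ_def using e assms(3) gpz[OF g] by auto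
  then have "(\<lambda>i. if i = j then e else z) = (\<lambda>_. z)" using h unfolding kite_zero_def by auto
  then show False using e by (metis)
qed

lemma NJ_inter: "NJ E z J \<inter> NJ E z (-J) \<subseteq> {kite_zero z}"
  unfolding NJ_def kite_zero_def by (auto intro!: ext)



lemma inv_shift: "inv (\<lambda>i::int. i - 1) = (\<lambda>i. i + 1)"
  by (rule inv_unique_comp) (auto simp: o_def)

lemma normal_ne: "normal_ideal K q N \<Longrightarrow> N \<noteq> {}"
  unfolding normal_ideal_def ideal_def by blast

theorem theorem4p9:
  fixes E :: "'a set" and p :: "'a pop" and z :: 'a
    and lam rho :: "'i::countable \<Rightarrow> 'i"
  assumes "infinite (UNIV :: 'i set)"
    and "bij lam" and "bij rho"
    and "gpea E p z" and "E \<noteq> {z}" and "directed E p"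
    and "weak_comm E p lam rho"
    and "rdp1 (kite_carrier E) (kite_plus E p lam rho)"
    and "has_least_nontrivial_normal_ideal (kite_carrier E) (kite_plus E p lam rho)
           (kite_zero z :: ('i \<Rightarrow> 'a) + ('i \<Rightarrow> 'a))"
  shows "\<exists>f. pea_iso (kite_carrier E :: (('i \<Rightarrow> 'a) + ('i \<Rightarrow> 'a)) set) (kite_plus E p lam rho)
               (kite_carrier E :: ((int \<Rightarrow> 'a) + (int \<Rightarrow> 'a)) set)
               (kite_plus E p id (\<lambda>i::int. i - 1)) f"
proof -
  note g = assms(4) and bl = assms(2) and br = assms(3)
  obtain N where N: "normal_ideal (kite_carrier E) (kite_plus E p lam rho) N"
    "N \<noteq> {kite_zero z :: ('i \<Rightarrow> 'a) + ('i \<Rightarrow> 'a)}"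
    "\<forall>M. normal_ideal (kite_carrier E) (kite_plus E p lam rho) M \<and> M \<noteq> {kite_zero z} \<longrightarrow> N \<subseteq> M"
    using assms(9) unfolding has_least_nontrivial_normal_ideal_def by blast
  define s where "s = (\<lambda>j. inv rho (lam j))"
  have bs: "bij s" proof -
    have "bij (inv rho \<circ> lam)" using bij_comp[of lam "inv rho"] bl bij_imp_bij_inv[OF br] by blast
    then show ?thesis unfolding s_def by (simp add: o_def)
  qed
  have lamI: "\<And>i. lam (inv lam i) = i" using bl by (simp add: bij_is_surj surj_f_inv_f)
  have rhoI: "\<And>i. inv rho (rho i) = i" using br by (simp add: bij_is_inj)
  have sinv: "\<And>j. s (inv lam (rho j)) = j" unfolding s_def using lamI rhoI by simp
  have sinj: "inj s" using bs bij_is_inj by auto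
  define i0 :: 'i where "i0 = undefined"
  define J where "J = range (\<lambda>n. pw s n i0)"
  have sJ: "\<And>j. j \<in> J \<Longrightarrow> s j \<in> J"
  proof -
    fix j assume "j \<in> J"
    then obtain n where "j = pw s n i0" unfolding J_def by auto
    then have "s j = pw s (n+1) i0" using pw_succ[OF bs] by simp
    then show "s j \<in> J" unfolding J_def by auto
  qed
  have sJ': "\<And>j. s j \<in> J \<Longrightarrow> j \<in> J"
  proof -
    fix j assume "s j \<in> J"
    then obtain n where "s j = pw s n i0" unfolding J_def by auto
    then have "j = pw s (n-1) i0" using pw_pred[OF bs] sinj by (metis inv_f_f)
    then show "j \<in> J" unfolding J_def by auto
  qed
  have iJ: "\<And>j. j \<in> J \<Longrightarrow> inv lam (rho j) \<in> J"
  proof -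
    fix j assume "j \<in> J"
    then obtain n where n: "j = pw s n i0" unfolding J_def by auto
    have "s (inv lam (rho j)) = s (pw s (n-1) i0)" using sinv n pw_succ[OF bs, of "n-1"] by simp
    then have "inv lam (rho j) = pw s (n-1) i0" using sinj by (simp add: inj_eq)
    then show "inv lam (rho j) \<in> J" unfolding J_def by auto
  qed
  have iJ': "\<And>j. inv lam (rho j) \<in> J \<Longrightarrow> j \<in> J" using sJ sinv by metis
  have JU: "J = UNIV"
  proof (rule ccontr)
    assume "J \<noteq> UNIV"
    then obtain j1 where j1: "j1 \<in> -J" by blast
    have i0J: "i0 \<in> J" unfolding J_def by (rule range_eqI[of _ _ 0]) (simp add: pw0)
    have n1: "normal_ideal (kite_carrier E) (kite_plus E p lam rho) (NJ E z J)"
      by (rule NJ_normal[OF g bl br]) (use sJ' iJ' in \<open>unfold s_def, blast+\<close>)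
    have n2: "normal_ideal (kite_carrier E) (kite_plus E p lam rho) (NJ E z (-J))"
      by (rule NJ_normal[OF g bl br]) (use sJ iJ in \<open>unfold s_def, blast+\<close>)
    have "N \<subseteq> NJ E z J" using N(3)[rule_format, OF conjI[OF n1 NJ_nontriv[OF g assms(5) i0J]]] .
    moreover have "N \<subseteq> NJ E z (-J)" using N(3)[rule_format, OF conjI[OF n2 NJ_nontriv[OF g assms(5) j1]]] .
    ultimately have "N \<subseteq> {kite_zero z}" using NJ_inter[of E z J] by (meson Int_greatest subset_trans)
    moreover have "N \<noteq> {}" using N(1) by (rule normal_ne)
    ultimately show False using N(2) by (metis subset_singletonD)
  qed
  define \<alpha> where "\<alpha> = (\<lambda>n. pw s n i0)"
  define \<beta> where "\<beta> = (\<lambda>n. lam (\<alpha> n))"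
  have ba: "bij \<alpha>" unfolding bij_def \<alpha>_def
    using pw_inj[OF bs assms(1)] JU unfolding J_def by auto
  have bb: "bij \<beta>" proof -
    have "bij (lam \<circ> \<alpha>)" using bij_comp[of \<alpha> lam] ba bl by blast
    then show ?thesis unfolding \<beta>_def by (simp add: o_def)
  qed
  have ab: "\<And>n. \<alpha> (n+1) = inv rho (\<beta> n)" unfolding \<alpha>_def \<beta>_def using pw_succ[OF bs] s_def by simp
  have lb: "\<And>n. inv lam (\<beta> n) = \<alpha> n" unfolding \<beta>_def using bl by (simp add: bij_is_inj)
  define F :: "(('i \<Rightarrow> 'a) + ('i \<Rightarrow> 'a)) \<Rightarrow> ((int \<Rightarrow> 'a) + (int \<Rightarrow> 'a))" where
    "F = case_sum (\<lambda>f. Inl (f \<circ> \<alpha>)) (\<lambda>a. Inr (a \<circ> \<beta>))"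
  define G :: "((int \<Rightarrow> 'a) + (int \<Rightarrow> 'a)) \<Rightarrow> (('i \<Rightarrow> 'a) + ('i \<Rightarrow> 'a))" where
    "G = case_sum (\<lambda>f. Inl (f \<circ> inv \<alpha>)) (\<lambda>a. Inr (a \<circ> inv \<beta>))"
  have aI1: "\<And>i. \<alpha> (inv \<alpha> i) = i" using ba by (simp add: bij_is_surj surj_f_inv_f)
  have aI2: "\<And>i. inv \<alpha> (\<alpha> i) = i" using ba by (simp add: bij_is_inj)
  have bI1: "\<And>i. \<beta> (inv \<beta> i) = i" using bb by (simp add: bij_is_surj surj_f_inv_f)
  have bI2: "\<And>i. inv \<beta> (\<beta> i) = i" using bb by (simp add: bij_is_inj)
  have sa: "\<And>P. (\<forall>n. P (\<alpha> n)) \<longleftrightarrow> (\<forall>i. P i)" by (metis aI1)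
  have sb: "\<And>P. (\<forall>n. P (\<beta> n)) \<longleftrightarrow> (\<forall>i. P i)" by (metis bI1)
  have bij: "bij_betw F (kite_carrier E) (kite_carrier E)"
  proof (rule bij_betw_byWitness[where f'=G])
    show "\<forall>a\<in>kite_carrier E. G (F a) = a"
      unfolding F_def G_def using aI1 bI1 aI2 bI2 by (auto simp: o_def split: sum.split)
    show "\<forall>a\<in>kite_carrier E. F (G a) = a"
      unfolding F_def G_def using aI1 bI1 aI2 bI2 by (auto simp: o_def split: sum.split)
    show "F ` kite_carrier E \<subseteq> kite_carrier E"
      unfolding F_def kite_carrier_def by auto
    show "G ` kite_carrier E \<subseteq> kite_carrier E"
      unfolding G_def kite_carrier_def by auto
  qed
  have hom: "\<forall>a\<in>kite_carrier E. \<forall>b\<in>kite_carrier E.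
     kite_plus E p id (\<lambda>i::int. i - 1) (F a) (F b) = map_option F (kite_plus E p lam rho a b)"
  proof (intro ballI)
    fix a b :: "('i \<Rightarrow> 'a) + ('i \<Rightarrow> 'a)"
    show "kite_plus E p id (\<lambda>i::int. i - 1) (F a) (F b) = map_option F (kite_plus E p lam rho a b)"
    proof (cases a; cases b)
      fix f g assume [simp]: "a = Inl f" "b = Inl g"
      have "(\<forall>n. p (f (\<alpha> n)) (g (\<alpha> n)) \<noteq> None) \<longleftrightarrow> (\<forall>i. p (f i) (g i) \<noteq> None)"
        by (rule sa)
      then show ?thesis unfolding F_def by (auto simp: o_def)
    next
      fix f g assume [simp]: "a = Inl f" "b = Inr g"
      have "(\<forall>n. pleq E p (f (inv lam (\<beta> n))) (g (\<beta> n))) \<longleftrightarrow> (\<forall>i. pleq E p (f (inv lam i)) (g i))"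
        by (rule sb)
      then show ?thesis unfolding F_def using lb by (auto simp: o_def)
    next
      fix f g assume [simp]: "a = Inr f" "b = Inl g"
      have "(\<forall>n. pleq E p (g (inv rho (\<beta> n))) (f (\<beta> n))) \<longleftrightarrow> (\<forall>i. pleq E p (g (inv rho i)) (f i))"
        by (rule sb)
      then show ?thesis unfolding F_def using ab by (auto simp: o_def inv_shift)
    next
      fix f g assume [simp]: "a = Inr f" "b = Inr g"
      show ?thesis unfolding F_def by simp
    qed
  qed
  show ?thesis unfolding pea_iso_def using bij hom by blast
qed

end
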